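(* Let $(\mathcal{X},d)$ be a complete, separable, non-compact, locally compact length space and $p>1$. Let $(\mu_t)_{t\ge0}$ be a unit-speed ray in $P_p(\mathcal{X})$ and let $(\nu_t)_{t\ge0}$ be a co-ray from $\nu_0$ to $(\mu_t)_{t\ge0}$. Then (i) $b_\mu(\nu_{t_1})-b_\mu(\nu_{t_2})=t_2-t_1$ for all $t_1,t_2\ge0$; (ii) $b_\mu(\lambda)\le b_\nu(\lambda)+b_\mu(\nu_0)$ for every $\lambda\in P_p(\mathcal{X})$.
   Context: $P_p(\mathcal{X})$: Borel probability measures on $\mathcal{X}$ with finite $p$-th moment, with $W_p(\mu,\nu)=\big(\min_{\pi}\int d(x,y)^p\,d\pi\big)^{1/p}$ over couplings $\pi$ of $\mu,\nu$. A ray in a metric space $(\mathcal{Y},d)$ is a continuous $\gamma:[0,\infty)\to\mathcal{Y}$ with $d(\gamma_s,\gamma_t)=|s-t|\,d(\gamma_0,\gamma_1)$; unit-speed means $d(\gamma_0,\gamma_1)=1$. $T(\mu,\nu)$ ($\mu,\nu\in P_p(\mathcal{X})$, $L=W_p(\mu,\nu)$) is the set of curves $(\mu_t)_{0\le t\le L}$ with $\mu_0=\mu$, $\mu_L=\nu$, $W_p(\mu_s,\mu_t)=|s-t|$. Co-ray: a ray $(\nu_t)_{t\ge0}$ in $P_p(\mathcal{X})$ is a co-ray from $\nu_0$ to the unit-speed ray $(\mu_t)_{t\ge0}$ if there exist $t_n\to+\infty$, $\nu_0^n\in P_p(\mathcal{X})$ with $W_p(\nu_0^n,\nu_0)\to0$,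 and $(\nu^n_t)_{0\le t\le L_n}\in T(\nu_0^n,\mu_{t_n})$, $L_n=W_p(\nu_0^n,\mu_{t_n})$, with $W_p(\nu_t^n,\nu_t)\to0$ for every $t\ge0$. For a unit-speed ray $(\mu_t)_{t\ge0}$ in $P_p(\mathcal{X})$, the Busemann function is $b_\mu(\lambda)=\lim_{t\to+\infty}[W_p(\lambda,\mu_t)-t]$, $\lambda\in P_p(\mathcal{X})$ (the limit exists and is finite); $b_\nu$ is defined likewise from the ray $(\nu_t)_{t\ge0}$. *)

theory Defs
  imports "HOL-Probability.Probability"
begin

definition curve_length :: "(real \<Rightarrow> 'a::metric_space) \<Rightarrow> real \<Rightarrow> real \<Rightarrow> ereal" where
  "curve_length g a b =
     (SUP (n, t) \<in> {(n::nat, t::nat \<Rightarrow> real). t 0 = a \<and> t n = b \<and> (\<forall>i<n. t i \<le> t (Suc i))}.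
        ereal (\<Sum>i<n. dist (g (t i)) (g (t (Suc i)))))"

definition length_space :: "'a::metric_space itself \<Rightarrow> bool" where
  "length_space _ \<longleftrightarrow>
     (\<forall>x y::'a. \<forall>e>0. \<exists>g. continuous_on {0..1} g \<and> g 0 = x \<and> g 1 = y \<and>
        curve_length g 0 1 < ereal (dist x y + e))"

definition Pp :: "real \<Rightarrow> 'a::metric_space measure set" where
  "Pp p = {\<mu>. prob_space \<mu> \<and> sets \<mu> = sets borel \<and>
              (\<exists>x0. integrable \<mu> (\<lambda>x. dist x0 x powr p))}"

definition couplings :: "'a::metric_space measure \<Rightarrow> 'a measure \<Rightarrow> ('a \<times> 'a) measure set" where
  "couplings \<mu> \<nu> = {\<pi>. prob_space \<pi> \<and> sets \<pi> = sets (borel \<Otimes>\<^sub>M borel) \<and>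
                       distr \<pi> borel fst = \<mu> \<and> distr \<pi> borel snd = \<nu>}"

definition Wp :: "real \<Rightarrow> 'a::metric_space measure \<Rightarrow> 'a measure \<Rightarrow> real" where
  "Wp p \<mu> \<nu> = (INF \<pi> \<in> couplings \<mu> \<nu>. \<integral>z. dist (fst z) (snd z) powr p \<partial>\<pi>) powr (1 / p)"

definition is_ray :: "real \<Rightarrow> (real \<Rightarrow> 'a::metric_space measure) \<Rightarrow> bool" where
  "is_ray p g \<longleftrightarrow> (\<forall>t\<ge>0. g t \<in> Pp p) \<and>
     (\<forall>t\<ge>0. ((\<lambda>s. Wp p (g s) (g t)) \<longlongrightarrow> 0) (at t within {0..})) \<and>
     (\<forall>s\<ge>0. \<forall>t\<ge>0. Wp p (g s) (g t) = \<bar>s - t\<bar> * Wp p (g 0) (g 1))"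

definition unit_ray :: "real \<Rightarrow> (real \<Rightarrow> 'a::metric_space measure) \<Rightarrow> bool" where
  "unit_ray p g \<longleftrightarrow> is_ray p g \<and> Wp p (g 0) (g 1) = 1"

definition geod_set :: "real \<Rightarrow> 'a::metric_space measure \<Rightarrow> 'a measure \<Rightarrow> (real \<Rightarrow> 'a measure) set" where
  "geod_set p \<mu> \<nu> = {g. (\<forall>t\<in>{0..Wp p \<mu> \<nu>}. g t \<in> Pp p) \<and> g 0 = \<mu> \<and> g (Wp p \<mu> \<nu>) = \<nu> \<and>
       (\<forall>s\<in>{0..Wp p \<mu> \<nu>}. \<forall>t\<in>{0..Wp p \<mu> \<nu>}. Wp p (g s) (g t) = \<bar>s - t\<bar>)}"

definition is_coray :: "real \<Rightarrow> (real \<Rightarrow> 'a::metric_space measure) \<Rightarrow> (real \<Rightarrow> 'a measure) \<Rightarrow> bool" where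
  "is_coray p \<nu> \<mu> \<longleftrightarrow> is_ray p \<nu> \<and>
     (\<exists>(tn :: nat \<Rightarrow> real) (\<nu>0n :: nat \<Rightarrow> 'a measure) (\<nu>n :: nat \<Rightarrow> real \<Rightarrow> 'a measure).
        filterlim tn at_top sequentially \<and>
        (\<forall>n. \<nu>0n n \<in> Pp p) \<and>
        (\<lambda>n. Wp p (\<nu>0n n) (\<nu> 0)) \<longlonglongrightarrow> 0 \<and>
        (\<forall>n. \<nu>n n \<in> geod_set p (\<nu>0n n) (\<mu> (tn n))) \<and>
        (\<forall>t\<ge>0. (\<lambda>n. Wp p (\<nu>n n t) (\<nu> t)) \<longlonglongrightarrow> 0))"

definition busemann :: "real \<Rightarrow> (real \<Rightarrow> 'a::metric_space measure) \<Rightarrow> 'a measure \<Rightarrow> real" where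
  "busemann p \<mu> \<rho> = Lim at_top (\<lambda>t. Wp p \<rho> (\<mu> t) - t)"

end

theory Submission
  imports Defs
begin

lemma powr_ge1_aux:
  fixes t p :: real
  assumes p: "p \<ge> 1" and t: "0 < t" "t \<le> 1"
  shows "t powr (1 - p) \<ge> 1"
proof -
  have "t powr (1 - p) = (1/t) powr (p - 1)" using t
    by (simp add: powr_divide powr_minus_divide[symmetric] powr_minus)
  also have "\<dots> \<ge> 1" using t p by (intro ge_one_powr_ge_zero) auto
  finally show ?thesis .
qed

lemma powr_convex_ineq:
  fixes u v t p :: real
  assumes p: "p \<ge> 1" and t: "0 < t" "t < 1" and u: "u \<ge> 0" and v: "v \<ge> 0"
  shows "(u + v) powr p \<le> t powr (1 - p) * u powr p + (1 - t) powr (1 - p) * v powr p"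
proof (cases "u = 0 \<or> v = 0")
  case True
  have a: "t powr (1 - p) \<ge> 1" "(1 - t) powr (1 - p) \<ge> 1" using t p by (auto intro!: powr_ge1_aux)
  show ?thesis
  proof (cases "u = 0")
    case True
    have "v powr p \<le> (1 - t) powr (1 - p) * v powr p"
      using a(2) by (metis mult_le_cancel_right1 powr_ge_zero order.strict_iff_not)
    then show ?thesis using True by simp
  next
    case False
    then have "v = 0" using \<open>u = 0 \<or> v = 0\<close> by auto
    have "u powr p \<le> t powr (1 - p) * u powr p"
      using a(1) by (metis mult_le_cancel_right1 powr_ge_zero order.strict_iff_not)
    then show ?thesis using \<open>v = 0\<close> by simp
  qed
next
  case False
  then have up: "u > 0" and vp: "v > 0" using u v by auto
  have "(u + v) powr p = ((1 - t) *\<^sub>R (v / (1 - t)) + t *\<^sub>R (u / t)) powr p"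
    using t by (simp add: add.commute)
  also have "\<dots> \<le> (1 - t) * (v / (1 - t)) powr p + t * (u / t) powr p"
    by (rule convex_onD[OF powr_convex[OF p]]) (use t up vp in auto)
  also have "(1 - t) * (v / (1 - t)) powr p = (1 - t) powr (1 - p) * v powr p"
    using t vp by (simp add: powr_divide powr_diff divide_simps)
  also have "t * (u / t) powr p = t powr (1 - p) * u powr p"
    using t up by (simp add: powr_divide powr_diff divide_simps)
  finally show ?thesis by simp
qed

lemma minkowski_aux:
  fixes f g :: "'b \<Rightarrow> real"
  assumes p: "p \<ge> 1"
    and fm: "f \<in> borel_measurable M" and gm: "g \<in> borel_measurable M"
    and f0: "\<And>x. f x \<ge> 0" and g0: "\<And>x. g x \<ge> 0"
    and fi: "integrable M (\<lambda>x. f x powr p)" and gi: "integrable M (\<lambda>x. g x powr p)"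
  shows "integrable M (\<lambda>x. (f x + g x) powr p)"
    and "(\<integral>x. (f x + g x) powr p \<partial>M) powr (1/p)
           \<le> (\<integral>x. f x powr p \<partial>M) powr (1/p) + (\<integral>x. g x powr p \<partial>M) powr (1/p)"
proof -
  have bnd: "(f x + g x) powr p \<le> t powr (1 - p) * f x powr p + (1 - t) powr (1 - p) * g x powr p"
    if "0 < t" "t < 1" for t x
    using powr_convex_ineq[OF p that f0 g0] .
  show int: "integrable M (\<lambda>x. (f x + g x) powr p)"
  proof (rule Bochner_Integration.integrable_bound)
    show "integrable M (\<lambda>x. (1/2) powr (1 - p) * f x powr p + (1 - 1/2) powr (1 - p) * g x powr p)"
      using fi gi by auto
    show "(\<lambda>x. (f x + g x) powr p) \<in> borel_measurable M" using fm gm by measurable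
    show "AE x in M. norm ((f x + g x) powr p)
       \<le> norm ((1/2) powr (1 - p) * f x powr p + (1 - 1/2) powr (1 - p) * g x powr p)"
      using bnd[of "1/2"] by (auto intro!: order_trans[OF _ abs_ge_self])
  qed
  define A where "A = (\<integral>x. f x powr p \<partial>M)"
  define B where "B = (\<integral>x. g x powr p \<partial>M)"
  have A0: "A \<ge> 0" "B \<ge> 0" unfolding A_def B_def by (auto intro!: integral_nonneg_AE)
  have ib: "(\<integral>x. (f x + g x) powr p \<partial>M) \<le> t powr (1 - p) * A + (1 - t) powr (1 - p) * B"
    if "0 < t" "t < 1" for t
  proof -
    have "(\<integral>x. (f x + g x) powr p \<partial>M) \<le> (\<integral>x. t powr (1 - p) * f x powr p + (1 - t) powr (1 - p) * g x powr p \<partial>M)"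
      using int fi gi bnd[OF that] by (intro integral_mono) auto
    also have "\<dots> = t powr (1 - p) * A + (1 - t) powr (1 - p) * B"
      using fi gi unfolding A_def B_def by simp
    finally show ?thesis .
  qed
  show "(\<integral>x. (f x + g x) powr p \<partial>M) powr (1/p) \<le> A powr (1/p) + B powr (1/p)"
  proof (cases "A = 0 \<or> B = 0")
    case True
    show ?thesis
    proof (cases "A = 0")
      case True
      then have "AE x in M. f x powr p = 0"
        using integral_nonneg_eq_0_iff_AE[OF fi] unfolding A_def by auto
      then have "AE x in M. (f x + g x) powr p = g x powr p" by (auto simp: f0)
      then have "(\<integral>x. (f x + g x) powr p \<partial>M) = B" unfolding B_def by (rule integral_cong_AE[rotated 2]) (use fm gm in auto)
      then show ?thesis using True by simp
    next
      case False
      then have "B = 0" using \<open>A = 0 \<or> B = 0\<close> by auto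
      then have "AE x in M. g x powr p = 0"
        using integral_nonneg_eq_0_iff_AE[OF gi] unfolding B_def by auto
      then have "AE x in M. (f x + g x) powr p = f x powr p" by (auto simp: g0)
      then have "(\<integral>x. (f x + g x) powr p \<partial>M) = A" unfolding A_def by (rule integral_cong_AE[rotated 2]) (use fm gm in auto)
      then show ?thesis using \<open>B = 0\<close> by simp
    qed
  next
    case False
    then have Ap: "A > 0" "B > 0" using A0 by auto
    define a where "a = A powr (1/p)"
    define b where "b = B powr (1/p)"
    have ap: "a > 0" "b > 0" using Ap unfolding a_def b_def by auto
    have Aa: "A = a powr p" "B = b powr p" using Ap p unfolding a_def b_def by (auto simp: powr_powr)
    define t where "t = a / (a + b)"
    have t: "0 < t" "t < 1" "1 - t = b / (a + b)" using ap unfolding t_def by (auto simp: field_simps)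
    have e1: "t powr (1 - p) * A = a * (a + b) powr (p - 1)"
    proof -
      have "t powr (1 - p) * A = a powr (1 - p) / (a + b) powr (1 - p) * a powr p"
        using ap unfolding t_def Aa by (simp add: powr_divide)
      also have "\<dots> = a * (a + b) powr (p - 1)"
      proof -
        have x1: "a powr (1 - p) * a powr p = a" using ap by (simp add: powr_add[symmetric])
        have x2: "(a + b) powr (p - 1) = inverse ((a + b) powr (1 - p))"
          by (simp add: powr_minus[symmetric])
        show ?thesis using x1 unfolding x2 by (simp add: field_simps)
      qed
      finally show ?thesis .
    qed
    have e2: "(1 - t) powr (1 - p) * B = b * (a + b) powr (p - 1)"
    proof -
      have "(1 - t) powr (1 - p) * B = b powr (1 - p) / (a + b) powr (1 - p) * b powr p"
        using ap unfolding t(3) Aa by (simp add: powr_divide)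
      also have "\<dots> = b * (a + b) powr (p - 1)"
      proof -
        have x1: "b powr (1 - p) * b powr p = b" using ap by (simp add: powr_add[symmetric])
        have x2: "(a + b) powr (p - 1) = inverse ((a + b) powr (1 - p))"
          by (simp add: powr_minus[symmetric])
        show ?thesis using x1 unfolding x2 by (simp add: field_simps)
      qed
      finally show ?thesis .
    qed
    have "(\<integral>x. (f x + g x) powr p \<partial>M) \<le> (a + b) powr p"
      using ib[OF t(1,2)] unfolding e1 e2
      using ap by (simp add: distrib_right[symmetric] powr_add[symmetric] powr_mult_base)
    then have "(\<integral>x. (f x + g x) powr p \<partial>M) powr (1/p) \<le> ((a + b) powr p) powr (1/p)"
      using p by (intro powr_mono2) (auto intro!: integral_nonneg_AE)
    also have "\<dots> = a + b" using ap p by (simp add: powr_powr)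
    finally show ?thesis unfolding a_def b_def .
  qed
qed


lemma powr_sum_le2:
  fixes u v p :: real
  assumes "p \<ge> 1" "u \<ge> 0" "v \<ge> 0"
  shows "(u + v) powr p \<le> 2 powr (p - 1) * (u powr p + v powr p)"
proof -
  have h: "(1/2::real) powr (1 - p) = 2 powr (p - 1)"
    by (simp add: powr_divide powr_minus_divide[symmetric] powr_minus)
  have "(u + v) powr p \<le> (1/2) powr (1 - p) * u powr p + (1 - 1/2) powr (1 - p) * v powr p"
    by (rule powr_convex_ineq) (use assms in auto)
  also have "\<dots> = 2 powr (p - 1) * (u powr p + v powr p)"
    unfolding h by (simp add: algebra_simps h)
  finally show ?thesis .
qed

lemma dist_powr_bound:
  fixes x y z :: "'a::metric_space"
  assumes "p \<ge> 1"
  shows "dist x z powr p \<le> 2 powr (p - 1) * (dist x y powr p + dist y z powr p)"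
proof -
  have "dist x z powr p \<le> (dist x y + dist y z) powr p"
    using assms by (intro powr_mono2) (auto intro: dist_triangle)
  also have "\<dots> \<le> 2 powr (p - 1) * (dist x y powr p + dist y z powr p)"
    by (rule powr_sum_le2) (use assms in auto)
  finally show ?thesis .
qed

lemma Pp_D:
  assumes "\<mu> \<in> Pp p"
  shows "prob_space \<mu>" "sets \<mu> = sets borel" "space \<mu> = UNIV"
  using assms unfolding Pp_def by (auto dest: sets_eq_imp_space_eq)

lemma Pp_integrable:
  fixes \<mu> :: "'a::{metric_space, second_countable_topology} measure"
  assumes "\<mu> \<in> Pp p" "p \<ge> 1"
  shows "integrable \<mu> (\<lambda>x. dist x0 x powr p)"
proof -
  obtain x1 where i1: "integrable \<mu> (\<lambda>x. dist x1 x powr p)"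
    using assms unfolding Pp_def by auto
  have s: "sets \<mu> = sets borel" using Pp_D[OF assms(1)] by simp
  show ?thesis
  proof (rule Bochner_Integration.integrable_bound)
    show "integrable \<mu> (\<lambda>x. 2 powr (p - 1) * (dist x0 x1 powr p + dist x1 x powr p))"
    proof -
      interpret prob_space \<mu> using Pp_D[OF assms(1)] by simp
      show ?thesis using i1 by (intro integrable_mult_right Bochner_Integration.integrable_add integrable_const)
    qed
    show "(\<lambda>x. dist x0 x powr p) \<in> borel_measurable \<mu>"
      by (subst measurable_cong_sets[OF s refl]) measurable
    show "AE x in \<mu>. norm (dist x0 x powr p) \<le> norm (2 powr (p - 1) * (dist x0 x1 powr p + dist x1 x powr p))"
    proof (intro AE_I2)
      fix x
      have "dist x0 x powr p \<le> 2 powr (p - 1) * (dist x0 x1 powr p + dist x1 x powr p)"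
        by (rule dist_powr_bound[OF assms(2)])
      then show "norm (dist x0 x powr p) \<le> norm (2 powr (p - 1) * (dist x0 x1 powr p + dist x1 x powr p))"
        by (simp only: real_norm_def abs_of_nonneg[OF powr_ge_zero] abs_of_nonneg[OF order_trans[OF powr_ge_zero]])
    qed
  qed
qed

definition cost :: "real \<Rightarrow> ('a::metric_space \<times> 'a) measure \<Rightarrow> real" where
  "cost p \<pi> = (\<integral>z. dist (fst z) (snd z) powr p \<partial>\<pi>)"

lemma couplings_D:
  fixes \<pi> :: "('a::{metric_space, second_countable_topology} \<times> 'a) measure"
  assumes "\<pi> \<in> couplings a b"
  shows "prob_space \<pi>" "sets \<pi> = sets borel" "space \<pi> = UNIV"
    "sets \<pi> = sets (borel \<Otimes>\<^sub>M borel)" "distr \<pi> borel fst = a" "distr \<pi> borel snd = b"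
proof -
  have h: "prob_space \<pi>" "sets \<pi> = sets (borel \<Otimes>\<^sub>M borel)" "distr \<pi> borel fst = a" "distr \<pi> borel snd = b"
    using assms unfolding couplings_def by simp_all
  have s: "sets \<pi> = sets borel" using h(2) by (simp only: borel_prod)
  have "space \<pi> = space borel" using sets_eq_imp_space_eq[OF s] .
  then show "prob_space \<pi>" "sets \<pi> = sets borel" "space \<pi> = UNIV"
    "sets \<pi> = sets (borel \<Otimes>\<^sub>M borel)" "distr \<pi> borel fst = a" "distr \<pi> borel snd = b"
    using h s by simp_all
qed

lemma couplings_integrable_fst:
  fixes \<pi> :: "('a::{metric_space, second_countable_topology} \<times> 'a) measure"
  assumes "\<pi> \<in> couplings a b" "a \<in> Pp p" "p \<ge> 1"
  shows "integrable \<pi> (\<lambda>z. dist x0 (fst z) powr p)"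
proof -
  have s: "sets \<pi> = sets (borel \<Otimes>\<^sub>M borel)" using couplings_D(4)[OF assms(1)] by simp
  have m: "fst \<in> measurable \<pi> borel" by (subst measurable_cong_sets[OF s refl]) measurable
  have "integrable (distr \<pi> borel fst) (\<lambda>x. dist x0 x powr p)"
    using couplings_D(5)[OF assms(1)] Pp_integrable[OF assms(2,3)] by simp
  then show ?thesis by (subst (asm) integrable_distr_eq[OF m]) auto
qed

lemma couplings_integrable_snd:
  fixes \<pi> :: "('a::{metric_space, second_countable_topology} \<times> 'a) measure"
  assumes "\<pi> \<in> couplings a b" "b \<in> Pp p" "p \<ge> 1"
  shows "integrable \<pi> (\<lambda>z. dist x0 (snd z) powr p)"
proof -
  have s: "sets \<pi> = sets (borel \<Otimes>\<^sub>M borel)" using couplings_D(4)[OF assms(1)] by simp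
  have m: "snd \<in> measurable \<pi> borel" by (subst measurable_cong_sets[OF s refl]) measurable
  have "integrable (distr \<pi> borel snd) (\<lambda>x. dist x0 x powr p)"
    using couplings_D(6)[OF assms(1)] Pp_integrable[OF assms(2,3)] by simp
  then show ?thesis by (subst (asm) integrable_distr_eq[OF m]) auto
qed

lemma couplings_integrable:
  fixes \<pi> :: "('a::{metric_space, second_countable_topology} \<times> 'a) measure"
  assumes "\<pi> \<in> couplings a b" "a \<in> Pp p" "b \<in> Pp p" "p \<ge> 1"
  shows "integrable \<pi> (\<lambda>z. dist (fst z) (snd z) powr p)"
proof -
  fix x0 :: 'a
  have s: "sets \<pi> = sets (borel \<Otimes>\<^sub>M borel)" using couplings_D(4)[OF assms(1)] by simp
  show ?thesis
  proof (rule Bochner_Integration.integrable_bound)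
    show "integrable \<pi> (\<lambda>z. 2 powr (p - 1) * (dist (fst z) x0 powr p + dist x0 (snd z) powr p))"
      using couplings_integrable_fst[OF assms(1,2,4), of x0] couplings_integrable_snd[OF assms(1,3,4), of x0]
      by (auto simp: dist_commute)
    show "(\<lambda>z. dist (fst z) (snd z) powr p) \<in> borel_measurable \<pi>"
      by (subst measurable_cong_sets[OF s refl]) measurable
    show "AE z in \<pi>. norm (dist (fst z) (snd z) powr p) \<le> norm (2 powr (p - 1) * (dist (fst z) x0 powr p + dist x0 (snd z) powr p))"
    proof (intro AE_I2)
      fix z :: "'a \<times> 'a"
      have "dist (fst z) (snd z) powr p \<le> 2 powr (p - 1) * (dist (fst z) x0 powr p + dist x0 (snd z) powr p)"
        by (rule dist_powr_bound[OF assms(4)])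
      then show "norm (dist (fst z) (snd z) powr p) \<le> norm (2 powr (p - 1) * (dist (fst z) x0 powr p + dist x0 (snd z) powr p))"
        by (simp only: real_norm_def abs_of_nonneg[OF powr_ge_zero] abs_of_nonneg[OF order_trans[OF powr_ge_zero]])
    qed
  qed
qed

lemma cost_nonneg: "cost p \<pi> \<ge> 0"
  unfolding cost_def by (auto intro!: integral_nonneg_AE)

lemma product_coupling:
  fixes a b :: "'a::{metric_space, second_countable_topology} measure"
  assumes "a \<in> Pp p" "b \<in> Pp p"
  shows "a \<Otimes>\<^sub>M b \<in> couplings a b"
proof -
  interpret A: prob_space a using Pp_D[OF assms(1)] by simp
  interpret B: prob_space b using Pp_D[OF assms(2)] by simp
  interpret AB: pair_prob_space a b ..
  have sa: "sets a = sets borel" and sb: "sets b = sets borel" using Pp_D(2) assms by blast+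
  have s: "sets (a \<Otimes>\<^sub>M b) = sets (borel \<Otimes>\<^sub>M borel)"
    by (rule sets_pair_measure_cong[OF sa sb])
  have "distr (a \<Otimes>\<^sub>M b) borel fst = distr (a \<Otimes>\<^sub>M b) a fst"
    by (rule distr_cong) (auto simp: sa)
  also have "\<dots> = a" by (rule B.distr_pair_fst)
  finally have 1: "distr (a \<Otimes>\<^sub>M b) borel fst = a" .
  have 2: "distr (a \<Otimes>\<^sub>M b) borel snd = b"
  proof (rule measure_eqI)
    show "sets (distr (a \<Otimes>\<^sub>M b) borel snd) = sets b" using sb by simp
    fix X assume "X \<in> sets (distr (a \<Otimes>\<^sub>M b) borel snd)"
    then have X: "X \<in> sets b" "X \<in> sets borel" using sb by auto
    have m: "snd \<in> measurable (a \<Otimes>\<^sub>M b) borel"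
      by (subst measurable_cong_sets[OF s refl]) measurable
    have "emeasure (distr (a \<Otimes>\<^sub>M b) borel snd) X = emeasure (a \<Otimes>\<^sub>M b) (snd -` X \<inter> space (a \<Otimes>\<^sub>M b))"
      by (rule emeasure_distr[OF m X(2)])
    also have "snd -` X \<inter> space (a \<Otimes>\<^sub>M b) = space a \<times> X"
      using Pp_D(3)[OF assms(1)] Pp_D(3)[OF assms(2)] by (auto simp: space_pair_measure)
    also have "emeasure (a \<Otimes>\<^sub>M b) (space a \<times> X) = emeasure b X"
      using B.emeasure_pair_measure_Times[OF sets.top[of a] X(1)] A.emeasure_space_1 by simp
    finally show "emeasure (distr (a \<Otimes>\<^sub>M b) borel snd) X = emeasure b X" .
  qed
  have P: "prob_space (a \<Otimes>\<^sub>M b)" by (rule prob_space_pair[OF Pp_D(1)[OF assms(1)] Pp_D(1)[OF assms(2)]])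
  show ?thesis unfolding couplings_def mem_Collect_eq using s 1 2 P by (intro conjI)
qed


lemma quantizer:
  fixes r :: real assumes r: "r > 0"
  obtains N :: "'a::{metric_space, second_countable_topology} \<Rightarrow> nat" and q :: "nat \<Rightarrow> 'a"
  where "N \<in> borel \<rightarrow>\<^sub>M count_space UNIV" "\<And>y. dist y (q (N y)) < r"
proof -
  obtain D :: "'a set" where D: "countable D" "\<And>X. open X \<Longrightarrow> X \<noteq> {} \<Longrightarrow> \<exists>d\<in>D. d \<in> X"
    using countable_dense_exists by blast
  define q where "q = from_nat_into D"
  have ex: "\<exists>i. dist y (q i) < r" for y
  proof -
    obtain d where d: "d \<in> D" "d \<in> ball y r" using D(2)[of "ball y r"] r by auto
    then have "q (to_nat_on D d) = d" using D(1) unfolding q_def by (simp add: from_nat_into_to_nat_on)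
    then show ?thesis using d(2) by (metis mem_ball)
  qed
  define N where "N y = (LEAST i. dist y (q i) < r)" for y
  have "N \<in> borel \<rightarrow>\<^sub>M count_space UNIV" unfolding N_def by measurable
  moreover have "dist y (q (N y)) < r" for y unfolding N_def using ex[of y] by (rule LeastI_ex)
  ultimately show ?thesis using that by blast
qed

lemma nn_integral_nat_fun:
  fixes N :: "'b \<Rightarrow> nat"
  assumes N: "N \<in> M \<rightarrow>\<^sub>M count_space UNIV"
  shows "(\<integral>\<^sup>+y. g (N y) \<partial>M) = (\<Sum>i. g i * emeasure M (N -` {i} \<inter> space M))"
proof -
  let ?A = "\<lambda>i. N -` {i} \<inter> space M"
  have A: "?A i \<in> sets M" for i using N by (rule measurable_sets) simp
  have dj: "disjoint_family ?A" by (auto simp: disjoint_family_on_def)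
  have "(\<integral>\<^sup>+y. g (N y) \<partial>M) = (\<integral>\<^sup>+y. (\<Sum>i. g i * indicator (?A i) y) \<partial>M)"
  proof (intro nn_integral_cong)
    fix y assume "y \<in> space M"
    then have "y \<in> ?A (N y)" by simp
    then show "g (N y) = (\<Sum>i. g i * indicator (?A i) y)" using suminf_cmult_indicator[OF dj] by metis
  qed
  also have "\<dots> = (\<Sum>i. \<integral>\<^sup>+y. g i * indicator (?A i) y \<partial>M)"
    by (rule nn_integral_suminf) (use A in auto)
  also have "\<dots> = (\<Sum>i. g i * emeasure M (?A i))" using A by (simp add: nn_integral_cmult_indicator)
  finally show ?thesis .
qed

lemma disint:
  fixes \<pi> :: "'c measure" and b :: "'a::{metric_space, second_countable_topology} measure"
    and h :: "'c \<Rightarrow> 'a" and N :: "'a \<Rightarrow> nat"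
  assumes \<pi>: "prob_space \<pi>" and h[measurable]: "h \<in> \<pi> \<rightarrow>\<^sub>M borel" and hb: "distr \<pi> borel h = b"
    and N[measurable]: "N \<in> borel \<rightarrow>\<^sub>M count_space UNIV"
  defines "F \<equiv> \<lambda>i. {w \<in> space \<pi>. N (h w) = i}"
  defines "K \<equiv> \<lambda>i. if emeasure \<pi> (F i) = 0 then \<pi> else uniform_measure \<pi> (F i)"
  shows "K \<in> count_space UNIV \<rightarrow>\<^sub>M prob_algebra \<pi>"
    and "b \<bind> (\<lambda>y. K (N y)) = \<pi>"
    and "\<And>i. emeasure \<pi> (F i) \<noteq> 0 \<Longrightarrow> AE w in K i. N (h w) = i"
    and "\<And>i. emeasure \<pi> (F i) = emeasure b (N -` {i})"
proof -
  interpret prob_space \<pi> by (rule \<pi>)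
  have FS: "F i \<in> sets \<pi>" for i unfolding F_def by measurable
  have sb: "sets b = sets borel" using hb[symmetric] by simp
  have spb: "space b = UNIV" using sets_eq_imp_space_eq[OF sb] by simp
  show Fb: "emeasure \<pi> (F i) = emeasure b (N -` {i})" for i
  proof -
    have X: "N -` {i} \<in> sets borel" using measurable_sets[OF N, of "{i}"] by simp
    have "emeasure b (N -` {i}) = emeasure \<pi> (h -` (N -` {i}) \<inter> space \<pi>)"
      unfolding hb[symmetric] by (rule emeasure_distr[OF h X])
    also have "h -` (N -` {i}) \<inter> space \<pi> = F i" unfolding F_def by auto
    finally show ?thesis by simp
  qed
  have Kp: "K i \<in> space (prob_algebra \<pi>)" for i
  proof (cases "emeasure \<pi> (F i) = 0")
    case True
    then show ?thesis unfolding K_def space_prob_algebra using \<pi> by simp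
  next
    case False
    then have "prob_space (uniform_measure \<pi> (F i))"
      by (intro prob_space_uniform_measure) auto
    then show ?thesis unfolding K_def space_prob_algebra using False by simp
  qed
  show K: "K \<in> count_space UNIV \<rightarrow>\<^sub>M prob_algebra \<pi>"
    using Kp by simp
  have KN: "(\<lambda>y. K (N y)) \<in> b \<rightarrow>\<^sub>M prob_algebra \<pi>"
    using measurable_compose[OF N K] by (simp add: measurable_cong_sets[OF sb refl])
  have bP: "b \<in> space (prob_algebra b)"
    unfolding space_prob_algebra using hb prob_space_distr[OF h] by auto
  show "b \<bind> (\<lambda>y. K (N y)) = \<pi>"
  proof (rule measure_eqI)
    show "sets (b \<bind> (\<lambda>y. K (N y))) = sets \<pi>" by (rule sets_bind'[OF bP KN])
    fix A assume "A \<in> sets (b \<bind> (\<lambda>y. K (N y)))"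
    then have A: "A \<in> sets \<pi>" using sets_bind'[OF bP KN] by simp
    have "emeasure (b \<bind> (\<lambda>y. K (N y))) A = (\<integral>\<^sup>+y. emeasure (K (N y)) A \<partial>b)"
      by (rule emeasure_bind_prob_algebra[OF bP KN A])
    also have "\<dots> = (\<Sum>i. emeasure (K i) A * emeasure b (N -` {i} \<inter> space b))"
      by (rule nn_integral_nat_fun) (simp add: measurable_cong_sets[OF sb refl])
    also have "\<dots> = (\<Sum>i. emeasure \<pi> (F i \<inter> A))"
    proof (intro suminf_cong)
      fix i
      show "emeasure (K i) A * emeasure b (N -` {i} \<inter> space b) = emeasure \<pi> (F i \<inter> A)"
      proof (cases "emeasure \<pi> (F i) = 0")
        case True
        then have "emeasure \<pi> (F i \<inter> A) = 0"
          using emeasure_mono[of "F i \<inter> A" "F i" \<pi>] FS by auto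
        then show ?thesis using True Fb[of i] spb by simp
      next
        case False
        have "emeasure (K i) A = emeasure \<pi> (F i \<inter> A) / emeasure \<pi> (F i)"
          using False FS A unfolding K_def by simp
        moreover have "emeasure \<pi> (F i) < top" by (simp add: less_top[symmetric])
        ultimately show ?thesis using False Fb[of i] spb
          by (simp add: ennreal_divide_times ennreal_times_divide[symmetric] mult.commute[of _ "emeasure \<pi> (F i)"] ennreal_mult_divide_eq)
      qed
    qed
    also have "\<dots> = emeasure \<pi> (\<Union>i. F i \<inter> A)"
      by (rule suminf_emeasure) (use FS A in \<open>auto simp: disjoint_family_on_def F_def\<close>)
    also have "(\<Union>i. F i \<inter> A) = A" using sets.sets_into_space[OF A] unfolding F_def by auto
    finally show "emeasure (b \<bind> (\<lambda>y. K (N y))) A = emeasure \<pi> A" .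
  qed
  show "AE w in K i. N (h w) = i" if "emeasure \<pi> (F i) \<noteq> 0" for i
  proof -
    have "AE w in uniform_measure \<pi> (F i). N (h w) = i"
      by (rule AE_uniform_measureI[OF FS]) (auto simp: F_def)
    then show ?thesis using that unfolding K_def by simp
  qed
qed


lemma disint_ex:
  fixes \<pi> :: "'c measure" and b :: "'a::{metric_space, second_countable_topology} measure"
    and h :: "'c \<Rightarrow> 'a" and N :: "'a \<Rightarrow> nat"
  assumes \<pi>: "prob_space \<pi>" and h: "h \<in> \<pi> \<rightarrow>\<^sub>M borel" and hb: "distr \<pi> borel h = b"
    and N: "N \<in> borel \<rightarrow>\<^sub>M count_space UNIV"
  obtains K where "K \<in> count_space UNIV \<rightarrow>\<^sub>M prob_algebra \<pi>" "b \<bind> (\<lambda>y. K (N y)) = \<pi>"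
    "\<And>i. emeasure b (N -` {i}) \<noteq> 0 \<Longrightarrow> AE w in K i. N (h w) = i"
proof -
  note d = disint[OF \<pi> h hb N]
  show ?thesis
    by (rule that[OF d(1) d(2)]) (use d(3) d(4) in metis)
qed

lemma distr_pair_snd':
  assumes M: "prob_space M" and N: "prob_space N"
  shows "distr (M \<Otimes>\<^sub>M N) N snd = N"
proof (rule measure_eqI)
  interpret A: prob_space M by (rule M)
  interpret B: prob_space N by (rule N)
  show "sets (distr (M \<Otimes>\<^sub>M N) N snd) = sets N" by simp
  fix X assume "X \<in> sets (distr (M \<Otimes>\<^sub>M N) N snd)"
  then have X: "X \<in> sets N" by simp
  have "emeasure (distr (M \<Otimes>\<^sub>M N) N snd) X = emeasure (M \<Otimes>\<^sub>M N) (snd -` X \<inter> space (M \<Otimes>\<^sub>M N))"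
    by (rule emeasure_distr[OF measurable_snd X])
  also have "snd -` X \<inter> space (M \<Otimes>\<^sub>M N) = space M \<times> X"
    using sets.sets_into_space[OF X] by (auto simp: space_pair_measure)
  also have "emeasure (M \<Otimes>\<^sub>M N) (space M \<times> X) = emeasure N X"
    using B.emeasure_pair_measure_Times[OF sets.top[of M] X] A.emeasure_space_1 by simp
  finally show "emeasure (distr (M \<Otimes>\<^sub>M N) N snd) X = emeasure N X" .
qed

lemma glue:
  fixes a b c :: "'a::{metric_space, second_countable_topology} measure"
  assumes a: "a \<in> Pp p" and b: "b \<in> Pp p" and c: "c \<in> Pp p" and p: "p \<ge> 1"
    and \<pi>1: "\<pi>1 \<in> couplings a b" and \<pi>2: "\<pi>2 \<in> couplings b c" and r: "r > 0"
  shows "\<exists>\<gamma>\<in>couplings a c. cost p \<gamma> powr (1/p) \<le> cost p \<pi>1 powr (1/p) + cost p \<pi>2 powr (1/p) + 2 * r"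
proof -
  obtain N :: "'a \<Rightarrow> nat" and q where N[measurable]: "N \<in> borel \<rightarrow>\<^sub>M count_space UNIV"
    and Nq: "\<And>y. dist y (q (N y)) < r"
    using quantizer[OF r] by blast
  have P1: "prob_space \<pi>1" and s1: "sets \<pi>1 = sets (borel \<Otimes>\<^sub>M borel)"
    and m1: "distr \<pi>1 borel snd = b" "distr \<pi>1 borel fst = a"
    using couplings_D[OF \<pi>1] by auto
  have P2: "prob_space \<pi>2" and s2: "sets \<pi>2 = sets (borel \<Otimes>\<^sub>M borel)"
    and m2: "distr \<pi>2 borel fst = b" "distr \<pi>2 borel snd = c"
    using couplings_D[OF \<pi>2] by auto
  have sb: "sets b = sets borel" and spb: "space b = UNIV" and Pb: "prob_space b" using Pp_D[OF b] by auto
  have h1: "snd \<in> \<pi>1 \<rightarrow>\<^sub>M borel" by (subst measurable_cong_sets[OF s1 refl]) measurable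
  have h2: "fst \<in> \<pi>2 \<rightarrow>\<^sub>M borel" by (subst measurable_cong_sets[OF s2 refl]) measurable
  obtain K1 where K1: "K1 \<in> count_space UNIV \<rightarrow>\<^sub>M prob_algebra \<pi>1" "b \<bind> (\<lambda>y. K1 (N y)) = \<pi>1"
    "\<And>i. emeasure b (N -` {i}) \<noteq> 0 \<Longrightarrow> AE w in K1 i. N (snd w) = i"
    using disint_ex[OF P1 h1 m1(1) N] by blast
  obtain K2 where K2: "K2 \<in> count_space UNIV \<rightarrow>\<^sub>M prob_algebra \<pi>2" "b \<bind> (\<lambda>y. K2 (N y)) = \<pi>2"
    "\<And>i. emeasure b (N -` {i}) \<noteq> 0 \<Longrightarrow> AE w in K2 i. N (fst w) = i"
    using disint_ex[OF P2 h2 m2(1) N] by blast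
  have Nb: "N \<in> b \<rightarrow>\<^sub>M count_space UNIV" using N by (simp add: measurable_cong_sets[OF sb refl])
  have KN1: "(\<lambda>y. K1 (N y)) \<in> b \<rightarrow>\<^sub>M prob_algebra \<pi>1" using measurable_compose[OF Nb K1(1)] .
  have KN2: "(\<lambda>y. K2 (N y)) \<in> b \<rightarrow>\<^sub>M prob_algebra \<pi>2" using measurable_compose[OF Nb K2(1)] .
  have KK: "(\<lambda>y. K1 (N y) \<Otimes>\<^sub>M K2 (N y)) \<in> b \<rightarrow>\<^sub>M prob_algebra (\<pi>1 \<Otimes>\<^sub>M \<pi>2)"
    by (rule measurable_pair_prob[OF KN1 KN2])
  have Ki: "prob_space (K1 i)" "sets (K1 i) = sets \<pi>1" "prob_space (K2 i)" "sets (K2 i) = sets \<pi>2" for i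
    using measurable_space[OF K1(1), of i] measurable_space[OF K2(1), of i] by (auto simp: space_prob_algebra)
  have bP: "b \<in> space (prob_algebra b)" unfolding space_prob_algebra using Pb by auto
  define \<Gamma> where "\<Gamma> = b \<bind> (\<lambda>y. K1 (N y) \<Otimes>\<^sub>M K2 (N y))"
  have P\<Gamma>: "prob_space \<Gamma>" unfolding \<Gamma>_def by (rule prob_space_bind'[OF bP KK])
  have s\<Gamma>: "sets \<Gamma> = sets (\<pi>1 \<Otimes>\<^sub>M \<pi>2)" unfolding \<Gamma>_def by (rule sets_bind'[OF bP KK])
  have s\<Gamma>': "sets \<Gamma> = sets ((borel \<Otimes>\<^sub>M borel) \<Otimes>\<^sub>M (borel \<Otimes>\<^sub>M borel))"
    unfolding s\<Gamma> by (rule sets_pair_measure_cong[OF s1 s2])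
  have sp: "space b \<noteq> {}" using spb by simp
  have fstm: "fst \<in> \<pi>1 \<Otimes>\<^sub>M \<pi>2 \<rightarrow>\<^sub>M borel \<Otimes>\<^sub>M borel"
    using measurable_fst[of \<pi>1 \<pi>2] by (simp add: measurable_cong_sets[OF refl s1])
  have sndm: "snd \<in> \<pi>1 \<Otimes>\<^sub>M \<pi>2 \<rightarrow>\<^sub>M borel \<Otimes>\<^sub>M borel"
    using measurable_snd[of \<pi>1 \<pi>2] by (simp add: measurable_cong_sets[OF refl s2])
  have M1: "distr \<Gamma> (borel \<Otimes>\<^sub>M borel) fst = \<pi>1"
  proof -
    have "distr \<Gamma> (borel \<Otimes>\<^sub>M borel) fst = b \<bind> (\<lambda>y. distr (K1 (N y) \<Otimes>\<^sub>M K2 (N y)) (borel \<Otimes>\<^sub>M borel) fst)"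
      unfolding \<Gamma>_def by (rule distr_bind[OF measurable_prob_algebraD[OF KK] sp fstm])
    also have "\<dots> = b \<bind> (\<lambda>y. K1 (N y))"
    proof (rule bind_cong[OF refl])
      fix y
      have "distr (K1 (N y) \<Otimes>\<^sub>M K2 (N y)) (borel \<Otimes>\<^sub>M borel) fst = distr (K1 (N y) \<Otimes>\<^sub>M K2 (N y)) (K1 (N y)) fst"
        by (rule distr_cong) (auto simp: Ki s1)
      also have "\<dots> = K1 (N y)" by (rule prob_space.distr_pair_fst[OF Ki(3)])
      finally show "distr (K1 (N y) \<Otimes>\<^sub>M K2 (N y)) (borel \<Otimes>\<^sub>M borel) fst = K1 (N y)" .
    qed
    finally show ?thesis using K1(2) by simp
  qed
  have M2: "distr \<Gamma> (borel \<Otimes>\<^sub>M borel) snd = \<pi>2"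
  proof -
    have "distr \<Gamma> (borel \<Otimes>\<^sub>M borel) snd = b \<bind> (\<lambda>y. distr (K1 (N y) \<Otimes>\<^sub>M K2 (N y)) (borel \<Otimes>\<^sub>M borel) snd)"
      unfolding \<Gamma>_def by (rule distr_bind[OF measurable_prob_algebraD[OF KK] sp sndm])
    also have "\<dots> = b \<bind> (\<lambda>y. K2 (N y))"
    proof (rule bind_cong[OF refl])
      fix y
      have "distr (K1 (N y) \<Otimes>\<^sub>M K2 (N y)) (borel \<Otimes>\<^sub>M borel) snd = distr (K1 (N y) \<Otimes>\<^sub>M K2 (N y)) (K2 (N y)) snd"
        by (rule distr_cong) (auto simp: Ki s2)
      also have "\<dots> = K2 (N y)" by (rule distr_pair_snd'[OF Ki(1) Ki(3)])
      finally show "distr (K1 (N y) \<Otimes>\<^sub>M K2 (N y)) (borel \<Otimes>\<^sub>M borel) snd = K2 (N y)" .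
    qed
    finally show ?thesis using K2(2) by simp
  qed
  have fst\<Gamma>: "fst \<in> \<Gamma> \<rightarrow>\<^sub>M borel \<Otimes>\<^sub>M borel" using fstm by (simp add: measurable_cong_sets[OF s\<Gamma> refl])
  have snd\<Gamma>: "snd \<in> \<Gamma> \<rightarrow>\<^sub>M borel \<Otimes>\<^sub>M borel" using sndm by (simp add: measurable_cong_sets[OF s\<Gamma> refl])
  have AEb: "AE y in b. emeasure b (N -` {N y}) \<noteq> 0"
  proof -
    have "AE y in b. \<forall>i. emeasure b (N -` {i}) = 0 \<longrightarrow> N y \<noteq> i"
    proof (subst AE_all_countable, intro allI)
      fix i
      show "AE y in b. emeasure b (N -` {i}) = 0 \<longrightarrow> N y \<noteq> i"
      proof (cases "emeasure b (N -` {i}) = 0")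
        case True
        have "N -` {i} \<in> sets b" using measurable_sets[OF Nb, of "{i}"] spb by simp
        then have "N -` {i} \<in> null_sets b" using True by (simp add: null_sets_def)
        then show ?thesis by (rule AE_I') auto
      qed simp
    qed
    then show ?thesis by eventually_elim auto
  qed
  have AEmatch: "AE w in \<Gamma>. N (snd (fst w)) = N (fst (snd w))"
  proof -
    have pr: "Measurable.pred (\<pi>1 \<Otimes>\<^sub>M \<pi>2) (\<lambda>w. N (snd (fst w)) = N (fst (snd w)))"
    proof -
      have eq: "(\<lambda>w. N (snd (fst w)) = N (fst (snd w))) = (\<lambda>w. \<exists>i::nat. N (snd (fst w)) = i \<and> N (fst (snd w)) = i)"
        by auto
      show ?thesis unfolding eq
        by (subst measurable_cong_sets[OF sets_pair_measure_cong[OF s1 s2] refl]) measurable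
    qed
    have "AE y in b. AE w in K1 (N y) \<Otimes>\<^sub>M K2 (N y). N (snd (fst w)) = N (fst (snd w))"
      using AEb
    proof eventually_elim
      case (elim y)
      define i where "i = N y"
      have a1: "AE w in K1 i. N (snd w) = i" using K1(3) elim unfolding i_def by simp
      have a2: "AE w in K2 i. N (fst w) = i" using K2(3) elim unfolding i_def by simp
      have "AE w in distr (K1 i \<Otimes>\<^sub>M K2 i) (K1 i) fst. N (snd w) = i"
        unfolding prob_space.distr_pair_fst[OF Ki(3), of "K1 i" i] by (rule a1)
      then have b1: "AE w in K1 i \<Otimes>\<^sub>M K2 i. N (snd (fst w)) = i"
        by (rule AE_distrD[OF measurable_fst])
      have "AE w in distr (K1 i \<Otimes>\<^sub>M K2 i) (K2 i) snd. N (fst w) = i"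
        unfolding distr_pair_snd'[OF Ki(1) Ki(3), of i i] by (rule a2)
      then have b2: "AE w in K1 i \<Otimes>\<^sub>M K2 i. N (fst (snd w)) = i"
        by (rule AE_distrD[OF measurable_snd])
      from b1 b2 show ?case unfolding i_def[symmetric] by eventually_elim simp
    qed
    then show ?thesis unfolding \<Gamma>_def by (subst AE_bind[OF measurable_prob_algebraD[OF KK] pr])
  qed
  define \<gamma> where "\<gamma> = distr \<Gamma> (borel \<Otimes>\<^sub>M borel) (\<lambda>w. (fst (fst w), snd (snd w)))"
  have xzm: "(\<lambda>w. (fst (fst w), snd (snd w))) \<in> \<Gamma> \<rightarrow>\<^sub>M borel \<Otimes>\<^sub>M borel"
    by (subst measurable_cong_sets[OF s\<Gamma>' refl]) measurable
  have \<gamma>c: "\<gamma> \<in> couplings a c"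
  proof -
    have "prob_space \<gamma>" unfolding \<gamma>_def by (rule prob_space.prob_space_distr[OF P\<Gamma> xzm])
    moreover have "sets \<gamma> = sets (borel \<Otimes>\<^sub>M borel)" unfolding \<gamma>_def by simp
    moreover have "distr \<gamma> borel fst = a"
    proof -
      have "distr \<gamma> borel fst = distr \<Gamma> borel (fst \<circ> (\<lambda>w. (fst (fst w), snd (snd w))))"
        unfolding \<gamma>_def by (rule distr_distr[OF _ xzm]) measurable
      also have "\<dots> = distr \<Gamma> borel (fst \<circ> fst)" by (simp add: comp_def)
      also have "\<dots> = distr (distr \<Gamma> (borel \<Otimes>\<^sub>M borel) fst) borel fst"
        by (rule distr_distr[symmetric, OF _ fst\<Gamma>]) measurable
      also have "\<dots> = a" using M1 m1 by simp
      finally show ?thesis .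
    qed
    moreover have "distr \<gamma> borel snd = c"
    proof -
      have "distr \<gamma> borel snd = distr \<Gamma> borel (snd \<circ> (\<lambda>w. (fst (fst w), snd (snd w))))"
        unfolding \<gamma>_def by (rule distr_distr[OF _ xzm]) measurable
      also have "\<dots> = distr \<Gamma> borel (snd \<circ> snd)" by (simp add: comp_def)
      also have "\<dots> = distr (distr \<Gamma> (borel \<Otimes>\<^sub>M borel) snd) borel snd"
        by (rule distr_distr[symmetric, OF _ snd\<Gamma>]) measurable
      also have "\<dots> = c" using M2 m2 by simp
      finally show ?thesis .
    qed
    ultimately show ?thesis unfolding couplings_def by simp
  qed
  define f where "f w = dist (fst (fst w)) (snd (fst w))" for w :: "('a \<times> 'a) \<times> ('a \<times> 'a)"
  define g0 where "g0 w = dist (fst (snd w)) (snd (snd w))" for w :: "('a \<times> 'a) \<times> ('a \<times> 'a)"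
  define g where "g w = g0 w + 2 * r" for w
  have fm: "f \<in> borel_measurable \<Gamma>" unfolding f_def by (subst measurable_cong_sets[OF s\<Gamma>' refl]) measurable
  have g0m: "g0 \<in> borel_measurable \<Gamma>" unfolding g0_def by (subst measurable_cong_sets[OF s\<Gamma>' refl]) measurable
  have gm: "g \<in> borel_measurable \<Gamma>" unfolding g_def using g0m by measurable
  have dm: "(\<lambda>z::'a \<times> 'a. dist (fst z) (snd z) powr p) \<in> borel_measurable (borel \<Otimes>\<^sub>M borel)" by measurable
  have i1: "integrable \<pi>1 (\<lambda>z. dist (fst z) (snd z) powr p)" by (rule couplings_integrable[OF \<pi>1 a b p])
  have i2: "integrable \<pi>2 (\<lambda>z. dist (fst z) (snd z) powr p)" by (rule couplings_integrable[OF \<pi>2 b c p])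
  have fi: "integrable \<Gamma> (\<lambda>w. f w powr p)"
    using i1 unfolding M1[symmetric] f_def by (subst (asm) integrable_distr_eq[OF fst\<Gamma> dm])
  have fI: "(\<integral>w. f w powr p \<partial>\<Gamma>) = cost p \<pi>1"
    unfolding cost_def M1[symmetric] f_def by (subst integral_distr[OF fst\<Gamma> dm]) simp
  have g0i: "integrable \<Gamma> (\<lambda>w. g0 w powr p)"
    using i2 unfolding M2[symmetric] g0_def by (subst (asm) integrable_distr_eq[OF snd\<Gamma> dm])
  have g0I: "(\<integral>w. g0 w powr p \<partial>\<Gamma>) = cost p \<pi>2"
    unfolding cost_def M2[symmetric] g0_def by (subst integral_distr[OF snd\<Gamma> dm]) simp
  interpret G: prob_space \<Gamma> by (rule P\<Gamma>)
  have ci: "integrable \<Gamma> (\<lambda>w. (2 * r) powr p)" by simp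
  have cI: "(\<integral>w. (2 * r) powr p \<partial>\<Gamma>) powr (1/p) = 2 * r" using r p by (simp add: powr_powr G.prob_space)
  have g0nn: "\<And>w. g0 w \<ge> 0" by (simp add: g0_def)
  have cm: "(\<lambda>_. 2 * r) \<in> borel_measurable \<Gamma>" by simp
  have cnn: "\<And>w::('a \<times> 'a) \<times> ('a \<times> 'a). 0 \<le> 2 * r" using r by simp
  note mk1 = minkowski_aux[OF p g0m cm g0nn cnn g0i ci]
  have gi: "integrable \<Gamma> (\<lambda>w. g w powr p)" unfolding g_def using mk1(1) r by (simp add: g0_def)
  have gI: "(\<integral>w. g w powr p \<partial>\<Gamma>) powr (1/p) \<le> cost p \<pi>2 powr (1/p) + 2 * r"
    using mk1(2) r cI g0I unfolding g_def by (simp add: g0_def)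
  note mk2 = minkowski_aux[OF p fm gm _ _ fi gi]
  have f0: "f w \<ge> 0" "g w \<ge> 0" for w unfolding f_def g_def g0_def using r by auto
  have fgi: "integrable \<Gamma> (\<lambda>w. (f w + g w) powr p)" using mk2(1) f0 by simp
  have fgI: "(\<integral>w. (f w + g w) powr p \<partial>\<Gamma>) powr (1/p) \<le> cost p \<pi>1 powr (1/p) + (cost p \<pi>2 powr (1/p) + 2 * r)"
    using mk2(2)[OF f0] gI fI by simp
  have dxz: "(\<lambda>w. dist (fst (fst w)) (snd (snd w)) powr p) \<in> borel_measurable \<Gamma>"
    by (subst measurable_cong_sets[OF s\<Gamma>' refl]) measurable
  have AEle: "AE w in \<Gamma>. dist (fst (fst w)) (snd (snd w)) powr p \<le> (f w + g w) powr p"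
    using AEmatch
  proof eventually_elim
    case (elim w)
    define y1 where "y1 = snd (fst w)"
    define y2 where "y2 = fst (snd w)"
    have "dist y1 y2 \<le> dist y1 (q (N y1)) + dist (q (N y2)) y2"
      using elim dist_triangle[of y1 y2 "q (N y1)"] unfolding y1_def y2_def by (simp add: dist_commute)
    also have "\<dots> \<le> 2 * r" using Nq[of y1] Nq[of y2] by (simp add: dist_commute)
    finally have "dist y1 y2 \<le> 2 * r" .
    then have "dist (fst (fst w)) (snd (snd w)) \<le> f w + g w"
      unfolding f_def g_def g0_def y1_def y2_def
      using dist_triangle[of "fst (fst w)" "snd (snd w)" "snd (fst w)"]
        dist_triangle[of "snd (fst w)" "snd (snd w)" "fst (snd w)"] by simp
    then show ?case using p by (intro powr_mono2) auto
  qed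
  have dI: "integrable \<Gamma> (\<lambda>w. dist (fst (fst w)) (snd (snd w)) powr p)"
    by (rule Bochner_Integration.integrable_bound[OF fgi dxz]) (use AEle f0 in \<open>auto elim!: eventually_mono\<close>)
  have "cost p \<gamma> = (\<integral>w. dist (fst (fst w)) (snd (snd w)) powr p \<partial>\<Gamma>)"
    unfolding cost_def \<gamma>_def by (subst integral_distr[OF xzm dm]) simp
  also have "\<dots> \<le> (\<integral>w. (f w + g w) powr p \<partial>\<Gamma>)"
    by (rule integral_mono_AE[OF dI fgi AEle])
  finally have "cost p \<gamma> powr (1/p) \<le> (\<integral>w. (f w + g w) powr p \<partial>\<Gamma>) powr (1/p)"
    using p by (intro powr_mono2) (auto simp: cost_nonneg)
  then have "cost p \<gamma> powr (1/p) \<le> cost p \<pi>1 powr (1/p) + cost p \<pi>2 powr (1/p) + 2 * r"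
    using fgI by simp
  then show ?thesis using \<gamma>c by blast
qed


lemma Wp_nonneg: "Wp p a b \<ge> 0"
  unfolding Wp_def by simp

lemma Wp_le_cost:
  fixes a b :: "'a::{metric_space, second_countable_topology} measure"
  assumes "a \<in> Pp p" "b \<in> Pp p" "p > 0" "\<pi> \<in> couplings a b"
  shows "Wp p a b \<le> cost p \<pi> powr (1/p)"
proof -
  have bdd: "bdd_below (cost p ` couplings a b)" by (rule bdd_belowI[of _ 0]) (auto simp: cost_nonneg)
  have ne: "couplings a b \<noteq> {}" using product_coupling[OF assms(1,2)] by blast
  have "(INF \<pi>\<in>couplings a b. cost p \<pi>) \<le> cost p \<pi>" by (rule cINF_lower[OF bdd assms(4)])
  moreover have "(INF \<pi>\<in>couplings a b. cost p \<pi>) \<ge> 0" by (rule cINF_greatest[OF ne]) (simp add: cost_nonneg)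
  ultimately have "(INF \<pi>\<in>couplings a b. cost p \<pi>) powr (1/p) \<le> cost p \<pi> powr (1/p)"
    using assms(3) by (intro powr_mono2) auto
  then show ?thesis unfolding Wp_def cost_def .
qed

lemma Wp_ge:
  fixes a b :: "'a::{metric_space, second_countable_topology} measure"
  assumes "a \<in> Pp p" "b \<in> Pp p" "p > 0"
    and le: "\<And>\<pi>. \<pi> \<in> couplings a b \<Longrightarrow> s \<le> cost p \<pi> powr (1/p)"
  shows "s \<le> Wp p a b"
proof (cases "s \<le> 0")
  case True then show ?thesis using Wp_nonneg[of p a b] by linarith
next
  case False
  then have s: "s > 0" by simp
  have ne: "couplings a b \<noteq> {}" using product_coupling[OF assms(1,2)] by blast
  have "s powr p \<le> cost p \<pi>" if "\<pi> \<in> couplings a b" for \<pi>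
  proof -
    have "s powr p \<le> (cost p \<pi> powr (1/p)) powr p" using le[OF that] s assms(3) by (intro powr_mono2) auto
    also have "\<dots> = cost p \<pi>" using assms(3) cost_nonneg[of p \<pi>] by (simp add: powr_powr)
    finally show ?thesis .
  qed
  then have "s powr p \<le> (INF \<pi>\<in>couplings a b. cost p \<pi>)" by (intro cINF_greatest[OF ne])
  then have "(s powr p) powr (1/p) \<le> (INF \<pi>\<in>couplings a b. cost p \<pi>) powr (1/p)"
    using assms(3) by (intro powr_mono2) auto
  also have "(s powr p) powr (1/p) = s" using s assms(3) by (simp add: powr_powr)
  finally show ?thesis unfolding Wp_def cost_def .
qed

lemma swap_coupling:
  fixes \<pi> :: "('a::{metric_space, second_countable_topology} \<times> 'a) measure"
  assumes "\<pi> \<in> couplings a b"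
  shows "distr \<pi> (borel \<Otimes>\<^sub>M borel) (\<lambda>z. (snd z, fst z)) \<in> couplings b a"
    and "cost p (distr \<pi> (borel \<Otimes>\<^sub>M borel) (\<lambda>z. (snd z, fst z))) = cost p \<pi>"
proof -
  note D = couplings_D[OF assms]
  have sw: "(\<lambda>z. (snd z, fst z)) \<in> \<pi> \<rightarrow>\<^sub>M borel \<Otimes>\<^sub>M borel"
    by (subst measurable_cong_sets[OF D(4) refl]) measurable
  have fm: "fst \<in> \<pi> \<rightarrow>\<^sub>M borel" by (subst measurable_cong_sets[OF D(4) refl]) measurable
  have sm: "snd \<in> \<pi> \<rightarrow>\<^sub>M borel" by (subst measurable_cong_sets[OF D(4) refl]) measurable
  let ?s = "distr \<pi> (borel \<Otimes>\<^sub>M borel) (\<lambda>z. (snd z, fst z))"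
  have "prob_space ?s" by (rule prob_space.prob_space_distr[OF D(1) sw])
  moreover have "distr ?s borel fst = b"
  proof -
    have "distr ?s borel fst = distr \<pi> borel (fst \<circ> (\<lambda>z. (snd z, fst z)))"
      by (rule distr_distr[OF _ sw]) measurable
    also have "\<dots> = distr \<pi> borel snd" by (simp add: comp_def)
    finally show ?thesis using D(6) by simp
  qed
  moreover have "distr ?s borel snd = a"
  proof -
    have "distr ?s borel snd = distr \<pi> borel (snd \<circ> (\<lambda>z. (snd z, fst z)))"
      by (rule distr_distr[OF _ sw]) measurable
    also have "\<dots> = distr \<pi> borel fst" by (simp add: comp_def)
    finally show ?thesis using D(5) by simp
  qed
  ultimately show "?s \<in> couplings b a" unfolding couplings_def by simp
  have dm: "(\<lambda>z::'a \<times> 'a. dist (fst z) (snd z) powr p) \<in> borel_measurable (borel \<Otimes>\<^sub>M borel)" by measurable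
  show "cost p ?s = cost p \<pi>"
    unfolding cost_def by (subst integral_distr[OF sw dm]) (simp add: dist_commute)
qed

lemma Wp_sym_le:
  fixes a b :: "'a::{metric_space, second_countable_topology} measure"
  assumes "a \<in> Pp p" "b \<in> Pp p" "p > 0"
  shows "Wp p a b \<le> Wp p b a"
proof (rule Wp_ge[OF assms(2,1,3)])
  fix \<pi> assume "\<pi> \<in> couplings b a"
  then show "Wp p a b \<le> cost p \<pi> powr (1/p)"
    using Wp_le_cost[OF assms, OF swap_coupling(1)] swap_coupling(2) by metis
qed

lemma Wp_sym:
  fixes a b :: "'a::{metric_space, second_countable_topology} measure"
  assumes "a \<in> Pp p" "b \<in> Pp p" "p > 0"
  shows "Wp p a b = Wp p b a"
  using Wp_sym_le[OF assms] Wp_sym_le[OF assms(2,1,3)] by simp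

lemma Wp_triangle:
  fixes a b c :: "'a::{metric_space, second_countable_topology} measure"
  assumes a: "a \<in> Pp p" and b: "b \<in> Pp p" and c: "c \<in> Pp p" and p: "p \<ge> 1"
  shows "Wp p a c \<le> Wp p a b + Wp p b c"
proof (rule field_le_epsilon)
  fix e :: real assume e: "e > 0"
  have p0: "p > 0" using p by simp
  have "Wp p a c - Wp p a b - e \<le> Wp p b c"
  proof (rule Wp_ge[OF b c p0])
    fix \<pi>2 assume \<pi>2: "\<pi>2 \<in> couplings b c"
    have "Wp p a c - cost p \<pi>2 powr (1/p) - e \<le> Wp p a b"
    proof (rule Wp_ge[OF a b p0])
      fix \<pi>1 assume \<pi>1: "\<pi>1 \<in> couplings a b"
      obtain \<gamma> where \<gamma>: "\<gamma> \<in> couplings a c"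
        "cost p \<gamma> powr (1/p) \<le> cost p \<pi>1 powr (1/p) + cost p \<pi>2 powr (1/p) + 2 * (e/2)"
        using glue[OF a b c p \<pi>1 \<pi>2, of "e/2"] e by auto
      have "Wp p a c \<le> cost p \<gamma> powr (1/p)" by (rule Wp_le_cost[OF a c p0 \<gamma>(1)])
      then show "Wp p a c - cost p \<pi>2 powr (1/p) - e \<le> cost p \<pi>1 powr (1/p)" using \<gamma>(2) by simp
    qed
    then show "Wp p a c - Wp p a b - e \<le> cost p \<pi>2 powr (1/p)" by simp
  qed
  then show "Wp p a c \<le> Wp p a b + Wp p b c + e" by simp
qed


lemma busemann_props:
  fixes g :: "real \<Rightarrow> 'a::{metric_space, second_countable_topology} measure"
  assumes g: "\<And>t. t \<ge> 0 \<Longrightarrow> g t \<in> Pp p"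
    and gw: "\<And>s t. s \<ge> 0 \<Longrightarrow> t \<ge> 0 \<Longrightarrow> Wp p (g s) (g t) = \<bar>s - t\<bar>"
    and l: "l \<in> Pp p" and p: "p \<ge> 1"
  shows "((\<lambda>t. Wp p l (g t) - t) \<longlongrightarrow> busemann p g l) at_top"
proof -
  define f where "f t = Wp p l (g t) - t" for t
  have mono: "f s \<le> f t" if "0 \<le> t" "t \<le> s" for s t
  proof -
    have "Wp p l (g s) \<le> Wp p l (g t) + Wp p (g t) (g s)"
      by (rule Wp_triangle[OF l g g p]) (use that in auto)
    also have "Wp p (g t) (g s) = s - t" using gw[of t s] that by simp
    finally show ?thesis unfolding f_def by simp
  qed
  have lb: "f t \<ge> - Wp p (g 0) l" if "t \<ge> 0" for t
  proof -
    have "Wp p (g 0) (g t) \<le> Wp p (g 0) l + Wp p l (g t)"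
      by (rule Wp_triangle[OF g l g p]) (use that in auto)
    then show ?thesis using gw[of 0 t] that unfolding f_def by simp
  qed
  define L where "L = Inf (f ` {0..})"
  have bdd: "bdd_below (f ` {0..})" using lb by (intro bdd_belowI[of _ "- Wp p (g 0) l"]) auto
  have Lle: "L \<le> f t" if "t \<ge> 0" for t unfolding L_def using bdd that by (intro cInf_lower) auto
  have lim: "(f \<longlongrightarrow> L) at_top"
  proof (rule order_tendstoI)
    fix a assume "a < L"
    then show "eventually (\<lambda>t. a < f t) at_top"
      using Lle by (intro eventually_at_top_linorderI[of 0]) (auto intro: less_le_trans)
  next
    fix a assume "L < a"
    then obtain t0 where t0: "t0 \<ge> 0" "f t0 < a"
      unfolding L_def using cInf_less_iff[OF _ bdd] by auto
    then show "eventually (\<lambda>t. f t < a) at_top"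
      using mono by (intro eventually_at_top_linorderI[of t0]) (auto intro: le_less_trans)
  qed
  have "busemann p g l = L" unfolding busemann_def using lim unfolding f_def
    by (intro tendsto_Lim) auto
  then show ?thesis using lim unfolding f_def by simp
qed

lemma busemann_lip:
  fixes g :: "real \<Rightarrow> 'a::{metric_space, second_countable_topology} measure"
  assumes g: "\<And>t. t \<ge> 0 \<Longrightarrow> g t \<in> Pp p"
    and gw: "\<And>s t. s \<ge> 0 \<Longrightarrow> t \<ge> 0 \<Longrightarrow> Wp p (g s) (g t) = \<bar>s - t\<bar>"
    and l1: "l1 \<in> Pp p" and l2: "l2 \<in> Pp p" and p: "p \<ge> 1"
  shows "busemann p g l1 \<le> Wp p l1 l2 + busemann p g l2"
proof (rule tendsto_le[OF trivial_limit_at_top_linorder])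
  show "((\<lambda>t. Wp p l1 (g t) - t) \<longlongrightarrow> busemann p g l1) at_top" by (rule busemann_props[OF g gw l1 p])
  show "((\<lambda>t. Wp p l1 l2 + (Wp p l2 (g t) - t)) \<longlongrightarrow> Wp p l1 l2 + busemann p g l2) at_top"
    by (intro tendsto_add tendsto_const busemann_props[OF g gw l2 p])
  show "\<forall>\<^sub>F t in at_top. Wp p l1 (g t) - t \<le> Wp p l1 l2 + (Wp p l2 (g t) - t)"
  proof (intro eventually_at_top_linorderI[of 0])
    fix t :: real assume "t \<ge> 0"
    then show "Wp p l1 (g t) - t \<le> Wp p l1 l2 + (Wp p l2 (g t) - t)"
      using Wp_triangle[OF l1 l2 g[of t] p] by simp
  qed
qed

theorem proposition5p4:
  fixes p :: real
    and \<mu> \<nu> :: "real \<Rightarrow> 'a::{metric_space, complete_space, second_countable_topology} measure"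
  assumes "length_space TYPE('a)"
    and "locally_compact_space (euclidean :: 'a topology)"
    and "\<not> compact (UNIV :: 'a set)"
    and "p > 1"
    and "unit_ray p \<mu>"
    and "is_coray p \<nu> \<mu>"
  shows "(\<forall>t1\<ge>0. \<forall>t2\<ge>0. busemann p \<mu> (\<nu> t1) - busemann p \<mu> (\<nu> t2) = t2 - t1) \<and>
         (\<forall>\<rho>\<in>Pp p. busemann p \<mu> \<rho> \<le> busemann p \<nu> \<rho> + busemann p \<mu> (\<nu> 0))"
proof -
  have p1: "p \<ge> 1" and p0: "p > 0" using assms(4) by auto
  have \<mu>P: "\<And>t. t \<ge> 0 \<Longrightarrow> \<mu> t \<in> Pp p"
    and \<mu>W: "\<And>s t. s \<ge> 0 \<Longrightarrow> t \<ge> 0 \<Longrightarrow> Wp p (\<mu> s) (\<mu> t) = \<bar>s - t\<bar>"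
    using assms(5) unfolding unit_ray_def is_ray_def by auto
  have \<nu>ray: "is_ray p \<nu>" using assms(6) unfolding is_coray_def by (rule conjunct1)
  obtain tn \<nu>0n \<nu>n where rest: "filterlim tn at_top sequentially \<and>
        (\<forall>n. \<nu>0n n \<in> Pp p) \<and>
        (\<lambda>n. Wp p (\<nu>0n n) (\<nu> 0)) \<longlonglongrightarrow> 0 \<and>
        (\<forall>n. \<nu>n n \<in> geod_set p (\<nu>0n n) (\<mu> (tn n))) \<and>
        (\<forall>t\<ge>0. (\<lambda>n. Wp p (\<nu>n n t) (\<nu> t)) \<longlonglongrightarrow> 0)"
    using conjunct2[OF assms(6)[unfolded is_coray_def]] by (elim exE) (erule that)
  note tn = conjunct1[OF rest]
  note r2 = conjunct1[OF conjunct2[OF rest]]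
  note \<nu>0lim = conjunct1[OF conjunct2[OF conjunct2[OF rest]]]
  note r4 = conjunct1[OF conjunct2[OF conjunct2[OF conjunct2[OF rest]]]]
  note r5 = conjunct2[OF conjunct2[OF conjunct2[OF conjunct2[OF rest]]]]
  note \<nu>0nP = r2[rule_format]
  note geo = r4[rule_format]
  note \<nu>lim = r5[rule_format]
  define c where "c = Wp p (\<nu> 0) (\<nu> 1)"
  have \<nu>P: "\<And>t. t \<ge> 0 \<Longrightarrow> \<nu> t \<in> Pp p"
    and \<nu>W: "\<And>s t. s \<ge> 0 \<Longrightarrow> t \<ge> 0 \<Longrightarrow> Wp p (\<nu> s) (\<nu> t) = \<bar>s - t\<bar> * c"
  proof -
    note rr = \<nu>ray[unfolded is_ray_def]
    show "\<And>t. t \<ge> 0 \<Longrightarrow> \<nu> t \<in> Pp p" by (rule conjunct1[OF rr, rule_format])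
    show "\<And>s t. s \<ge> 0 \<Longrightarrow> t \<ge> 0 \<Longrightarrow> Wp p (\<nu> s) (\<nu> t) = \<bar>s - t\<bar> * c"
      unfolding c_def by (rule conjunct2[OF conjunct2[OF rr], rule_format])
  qed
  define L where "L n = Wp p (\<nu>0n n) (\<mu> (tn n))" for n
  have gP: "\<And>n t. t \<in> {0..L n} \<Longrightarrow> \<nu>n n t \<in> Pp p"
    and g0: "\<And>n. \<nu>n n 0 = \<nu>0n n" and gL: "\<And>n. \<nu>n n (L n) = \<mu> (tn n)"
    and gW: "\<And>n s t. s \<in> {0..L n} \<Longrightarrow> t \<in> {0..L n} \<Longrightarrow> Wp p (\<nu>n n s) (\<nu>n n t) = \<bar>s - t\<bar>"
  proof -
    fix n
    note gg = geo[of n, unfolded geod_set_def mem_Collect_eq, folded L_def]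
    show "\<And>t. t \<in> {0..L n} \<Longrightarrow> \<nu>n n t \<in> Pp p" by (rule conjunct1[OF gg, rule_format])
    show "\<nu>n n 0 = \<nu>0n n" using conjunct1[OF conjunct2[OF gg]] .
    show "\<nu>n n (L n) = \<mu> (tn n)" using conjunct1[OF conjunct2[OF conjunct2[OF gg]]] .
    show "\<And>s t. s \<in> {0..L n} \<Longrightarrow> t \<in> {0..L n} \<Longrightarrow> Wp p (\<nu>n n s) (\<nu>n n t) = \<bar>s - t\<bar>"
      by (rule conjunct2[OF conjunct2[OF conjunct2[OF gg]], rule_format])
  qed
  have tn_ge: "\<forall>\<^sub>F n in sequentially. tn n \<ge> T" for T
    using tn by (simp add: filterlim_at_top)
  have \<nu>0P: "\<nu> 0 \<in> Pp p" using \<nu>P by simp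
  have \<mu>0P: "\<mu> 0 \<in> Pp p" using \<mu>P by simp
  have Lev: "\<forall>\<^sub>F n in sequentially. T \<le> L n" for T
  proof -
    define C0 where "C0 = Wp p (\<mu> 0) (\<nu> 0)"
    have "\<forall>\<^sub>F n in sequentially. Wp p (\<nu>0n n) (\<nu> 0) < 1"
      using order_tendstoD(2)[OF \<nu>0lim, of 1] by simp
    moreover have "\<forall>\<^sub>F n in sequentially. tn n \<ge> max 0 (T + C0 + 1)" by (rule tn_ge)
    ultimately show ?thesis
    proof eventually_elim
      case (elim n)
      then have t0: "tn n \<ge> 0" and t1: "tn n \<ge> T + C0 + 1" by auto
      have "tn n = Wp p (\<mu> 0) (\<mu> (tn n))" using \<mu>W[of 0 "tn n"] t0 by simp
      also have "\<dots> \<le> C0 + Wp p (\<nu> 0) (\<mu> (tn n))" unfolding C0_def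
        by (rule Wp_triangle[OF \<mu>0P \<nu>0P \<mu>P[OF t0] p1])
      also have "Wp p (\<nu> 0) (\<mu> (tn n)) \<le> Wp p (\<nu> 0) (\<nu>0n n) + L n" unfolding L_def
        by (rule Wp_triangle[OF \<nu>0P \<nu>0nP \<mu>P[OF t0] p1])
      also have "Wp p (\<nu> 0) (\<nu>0n n) = Wp p (\<nu>0n n) (\<nu> 0)" by (rule Wp_sym[OF \<nu>0P \<nu>0nP p0])
      finally show ?case using elim t1 by simp
    qed
  qed
  have c_le: "c \<le> 1"
  proof (rule tendsto_le[OF trivial_limit_sequentially])
    show "((\<lambda>n. 1 + Wp p (\<nu>0n n) (\<nu> 0) + Wp p (\<nu>n n 1) (\<nu> 1)) \<longlongrightarrow> 1) sequentially"
      using tendsto_add[OF tendsto_add[OF tendsto_const[of 1] \<nu>0lim] \<nu>lim[of 1]] by simp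
    show "((\<lambda>n. c) \<longlongrightarrow> c) sequentially" by simp
    show "\<forall>\<^sub>F n in sequentially. c \<le> 1 + Wp p (\<nu>0n n) (\<nu> 0) + Wp p (\<nu>n n 1) (\<nu> 1)"
      using Lev[of 1]
    proof eventually_elim
      case (elim n)
      have P0: "\<nu>n n 0 \<in> Pp p" and P1: "\<nu>n n 1 \<in> Pp p" using gP elim by auto
      have "c \<le> Wp p (\<nu> 0) (\<nu>n n 0) + Wp p (\<nu>n n 0) (\<nu> 1)" unfolding c_def
        by (rule Wp_triangle[OF \<nu>0P P0 \<nu>P p1]) simp
      also have "Wp p (\<nu>n n 0) (\<nu> 1) \<le> Wp p (\<nu>n n 0) (\<nu>n n 1) + Wp p (\<nu>n n 1) (\<nu> 1)"
        by (rule Wp_triangle[OF P0 P1 \<nu>P p1]) simp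
      also have "Wp p (\<nu>n n 0) (\<nu>n n 1) = 1" using gW[of 0 n 1] elim by simp
      also have "Wp p (\<nu> 0) (\<nu>n n 0) = Wp p (\<nu>0n n) (\<nu> 0)" using Wp_sym[OF \<nu>0P P0 p0] g0 by simp
      finally show ?case by simp
    qed
  qed
  let ?B = "busemann p \<mu>"
  have Blim: "\<And>l. l \<in> Pp p \<Longrightarrow> ((\<lambda>s. Wp p l (\<mu> s) - s) \<longlongrightarrow> ?B l) at_top"
    by (rule busemann_props[OF \<mu>P \<mu>W _ p1])
  have Blim_n: "\<And>l. l \<in> Pp p \<Longrightarrow> ((\<lambda>n. Wp p l (\<mu> (tn n)) - tn n) \<longlongrightarrow> ?B l) sequentially"
    by (rule filterlim_compose[OF Blim tn])
  have Blip: "\<And>l1 l2. l1 \<in> Pp p \<Longrightarrow> l2 \<in> Pp p \<Longrightarrow> ?B l1 \<le> Wp p l1 l2 + ?B l2"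
    by (rule busemann_lip[OF \<mu>P \<mu>W _ _ p1])
  have Bup: "?B (\<nu> t) \<le> ?B (\<nu> 0) - t" if t: "t \<ge> 0" for t
  proof (rule tendsto_le[OF trivial_limit_sequentially])
    show "((\<lambda>n. Wp p (\<nu>n n t) (\<nu> t) + Wp p (\<nu>0n n) (\<nu> 0) + (Wp p (\<nu> 0) (\<mu> (tn n)) - tn n) - t)
        \<longlongrightarrow> ?B (\<nu> 0) - t) sequentially"
      using tendsto_diff[OF tendsto_add[OF tendsto_add[OF \<nu>lim[OF t] \<nu>0lim] Blim_n[OF \<nu>0P]] tendsto_const[of t]]
      by simp
    show "((\<lambda>n. Wp p (\<nu> t) (\<mu> (tn n)) - tn n) \<longlongrightarrow> ?B (\<nu> t)) sequentially"
      by (rule Blim_n[OF \<nu>P[OF t]])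
    show "\<forall>\<^sub>F n in sequentially. Wp p (\<nu> t) (\<mu> (tn n)) - tn n
        \<le> Wp p (\<nu>n n t) (\<nu> t) + Wp p (\<nu>0n n) (\<nu> 0) + (Wp p (\<nu> 0) (\<mu> (tn n)) - tn n) - t"
      using Lev[of t] tn_ge[of 0]
    proof eventually_elim
      case (elim n)
      have Pt: "\<nu>n n t \<in> Pp p" using gP elim t by auto
      have PL: "\<nu>n n (L n) \<in> Pp p" using gP elim t by auto
      have "Wp p (\<nu> t) (\<mu> (tn n)) \<le> Wp p (\<nu> t) (\<nu>n n t) + Wp p (\<nu>n n t) (\<mu> (tn n))"
        by (rule Wp_triangle[OF \<nu>P[OF t] Pt \<mu>P p1]) (use elim in simp)
      also have "Wp p (\<nu> t) (\<nu>n n t) = Wp p (\<nu>n n t) (\<nu> t)" by (rule Wp_sym[OF \<nu>P[OF t] Pt p0])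
      also have "Wp p (\<nu>n n t) (\<mu> (tn n)) = L n - t"
        using gW[of t n "L n"] gL[of n] elim t by simp
      also have "L n \<le> Wp p (\<nu>0n n) (\<nu> 0) + Wp p (\<nu> 0) (\<mu> (tn n))" unfolding L_def
        by (rule Wp_triangle[OF \<nu>0nP \<nu>0P \<mu>P p1]) (use elim in simp)
      finally show ?case by simp
    qed
  qed
  have Beq: "?B (\<nu> t) = ?B (\<nu> 0) - t" if t: "t \<ge> 0" for t
  proof -
    have "?B (\<nu> 0) \<le> Wp p (\<nu> 0) (\<nu> t) + ?B (\<nu> t)" by (rule Blip[OF \<nu>0P \<nu>P[OF t]])
    also have "Wp p (\<nu> 0) (\<nu> t) = t * c" using \<nu>W[of 0 t] t by simp
    also have "t * c \<le> t" using c_le t by (simp add: mult_left_le)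
    finally show ?thesis using Bup[OF t] by simp
  qed
  have c1: "c = 1"
  proof -
    have "?B (\<nu> 0) \<le> Wp p (\<nu> 0) (\<nu> 1) + ?B (\<nu> 1)" by (rule Blip[OF \<nu>0P \<nu>P]) simp
    then have "1 \<le> c" using Beq[of 1] unfolding c_def by simp
    then show ?thesis using c_le by simp
  qed
  have \<nu>W1: "\<And>s t. s \<ge> 0 \<Longrightarrow> t \<ge> 0 \<Longrightarrow> Wp p (\<nu> s) (\<nu> t) = \<bar>s - t\<bar>"
    using \<nu>W c1 by simp
  have part1: "\<forall>t1\<ge>0. \<forall>t2\<ge>0. ?B (\<nu> t1) - ?B (\<nu> t2) = t2 - t1"
  proof (intro allI impI)
    fix t1 t2 :: real assume h: "t1 \<ge> 0" "t2 \<ge> 0"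
    show "?B (\<nu> t1) - ?B (\<nu> t2) = t2 - t1" using Beq[OF h(1)] Beq[OF h(2)] by linarith
  qed
  have part2: "?B \<rho> \<le> busemann p \<nu> \<rho> + ?B (\<nu> 0)" if \<rho>: "\<rho> \<in> Pp p" for \<rho>
  proof (rule tendsto_le[OF trivial_limit_at_top_linorder])
    show "((\<lambda>t. (Wp p \<rho> (\<nu> t) - t) + ?B (\<nu> 0)) \<longlongrightarrow> busemann p \<nu> \<rho> + ?B (\<nu> 0)) at_top"
      by (intro tendsto_add tendsto_const busemann_props[OF \<nu>P \<nu>W1 \<rho> p1])
    show "((\<lambda>t. ?B \<rho>) \<longlongrightarrow> ?B \<rho>) at_top" by simp
    show "\<forall>\<^sub>F t in at_top. ?B \<rho> \<le> (Wp p \<rho> (\<nu> t) - t) + ?B (\<nu> 0)"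
    proof (intro eventually_at_top_linorderI[of 0])
      fix t :: real assume t: "t \<ge> 0"
      have "?B \<rho> \<le> Wp p \<rho> (\<nu> t) + ?B (\<nu> t)" by (rule Blip[OF \<rho> \<nu>P[OF t]])
      then show "?B \<rho> \<le> (Wp p \<rho> (\<nu> t) - t) + ?B (\<nu> 0)" using Beq[OF t] by linarith
    qed
  qed
  show ?thesis using part1 part2 by blast
qed

end
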